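(* Let $V=\{i_1,\dots,i_m\}$ and let $\bm X$ (standard exponential margins) follow the chain geometric extremal graphical model with edges $\{i_1,i_2\},\dots,\{i_{m-1},i_m\}$, i.e. $g(\bm x)=\sum_{l=1}^{m-1}g_{\{i_l,i_{l+1}\}}(x_{i_l},x_{i_{l+1}})-\sum_{l=2}^{m-1}x_{i_l}$. Then for any $k\in\{1,\dots,m\}$, the marginal gauge $g_{V_{-k}}(\bm x_{V_{-k}})=\min_{x_{i_k}\ge0}g(\bm x)$ of $\bm X_{V_{-k}}$, $V_{-k}=V\setminus\{i_k\}$, is that of the chain geometric extremal graphical model on $V_{-k}$ with edges $E_{-k}=\{\{i_1,i_2\},\dots,\{i_{k-1},i_{k+1}\},\dots,\{i_{m-1},i_m\}\}$: $g_{V_{-k}}(\bm x_{V_{-k}})=\sum_{\{a,b\}\in E_{-k}}g_{\{a,b\}}(x_a,x_b)-\sum x_{i_l}$, where the last sum runs over the interior (non-endpoint) vertices of the chain $V_{-k}$.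
   Context: $g$ is the gauge of $\bm X$: $-\log f(t\bm x_t)/t\to g(\bm x)$ as $t\to\infty$ whenever $\bm x_t\to\bm x\in[0,\infty)^m$, $f$ the Lebesgue density; marginal gauges $g_J(\bm x_J)=\min_{x_s\ge0,\,s\notin J}g(\bm x)$ satisfy $g_J\ge\max_{j\in J}x_j$; in particular $g_{\{a,b\}}$ denotes the bivariate marginal gauge of $(X_a,X_b)$. *)

theory Defs
  imports "HOL-Analysis.Analysis"
begin

text \<open>Vectors in [0,inf)^V are modelled as functions 'v => real whose coordinates
  in V are nonnegative (coordinates outside V are irrelevant).\<close>

definition nonneg_on :: "'v set \<Rightarrow> ('v \<Rightarrow> real) \<Rightarrow> bool" where
  "nonneg_on A x \<longleftrightarrow> (\<forall>v\<in>A. 0 \<le> x v)"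

definition is_gauge :: "'v set \<Rightarrow> (('v \<Rightarrow> real) \<Rightarrow> real) \<Rightarrow> (('v \<Rightarrow> real) \<Rightarrow> real) \<Rightarrow> bool" where
  "is_gauge V f g \<longleftrightarrow>
     (\<forall>x xt. nonneg_on V x \<longrightarrow> (\<forall>v\<in>V. ((\<lambda>t. xt t v) \<longlongrightarrow> x v) at_top) \<longrightarrow>
        ((\<lambda>t::real. - ln (f (\<lambda>v. t * xt t v)) / t) \<longlongrightarrow> g x) at_top)"

text \<open>Marginal gauge g_J(x_J) = min over x_s >= 0 (s in V - J) of g(x), written as an infimum
  (the minimum, when attained, equals it).\<close>

definition marg_gauge :: "'v set \<Rightarrow> (('v \<Rightarrow> real) \<Rightarrow> real) \<Rightarrow> 'v set \<Rightarrow> ('v \<Rightarrow> real) \<Rightarrow> real" where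
  "marg_gauge V g J y = Inf {g x | x. nonneg_on V x \<and> (\<forall>j\<in>J. x j = y j)}"

text \<open>G {a,b} x depends only on (x a, x b).\<close>

definition chain_gauge :: "('v set \<Rightarrow> ('v \<Rightarrow> real) \<Rightarrow> real) \<Rightarrow> 'v list \<Rightarrow> ('v \<Rightarrow> real) \<Rightarrow> real" where
  "chain_gauge G vs x =
     (\<Sum>l<length vs - 1. G {vs ! l, vs ! Suc l} x) - (\<Sum>l\<in>{1..<length vs - 1}. x (vs ! l))"

end

theory Submission
  imports Defs
begin

fun cfr :: "('v set \<Rightarrow> ('v \<Rightarrow> real) \<Rightarrow> real) \<Rightarrow> ('v \<Rightarrow> real) \<Rightarrow> 'v list \<Rightarrow> real" where
  "cfr G x (a # b # rest) = G {a, b} x - x b + cfr G x (b # rest)"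
| "cfr G x _ = 0"

lemma M_cong:
  assumes "\<forall>j\<in>J. x j = x' j"
  shows "marg_gauge V g J x = marg_gauge V g J x'"
  unfolding marg_gauge_def using assms by metis

lemma cfr_cong:
  assumes "\<forall>v\<in>set ws. x v = x' v"
  shows "cfr (marg_gauge V g) x ws = cfr (marg_gauge V g) x' ws"
  using assms
proof (induction "marg_gauge V g" x ws rule: cfr.induct)
  case (1 x a b rest)
  have "marg_gauge V g {a, b} x = marg_gauge V g {a, b} x'"
    by (rule M_cong) (use 1 in auto)
  then show ?case using 1 by simp
qed simp_all

lemma cfr_snoc: "ws \<noteq> [] \<Longrightarrow> cfr G x (ws @ [b]) = cfr G x ws + G {last ws, b} x - x b"
proof (induction ws rule: induct_list012)
  case (3 a c zs)
  then show ?case by simp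
qed simp_all

lemma cfr_append: "cfr G x (p @ a # rest) = cfr G x (p @ [a]) + cfr G x (a # rest)"
proof (induction p rule: induct_list012)
  case (3 d e zs)
  then show ?case by simp
qed simp_all

lemma chain_cfr:
  assumes "length ws \<ge> 2"
  shows "chain_gauge G ws x = cfr G x ws + x (last ws)"
  using assms
proof (induction ws rule: induct_list012)
  case (3 a b zs)
  show ?case
  proof (cases zs)
    case Nil
    then show ?thesis by (simp add: chain_gauge_def)
  next
    case (Cons c zs')
    define ws' where "ws' = b # zs"
    define n where "n = length ws'"
    have n2: "n \<ge> 2" using Cons by (simp add: n_def ws'_def)
    have IH: "chain_gauge G ws' x = cfr G x ws' + x (last ws')"
      using 3 Cons by (simp add: ws'_def)
    have e1: "(\<Sum>l<length (a # ws') - 1. G {(a # ws') ! l, (a # ws') ! Suc l} x)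
        = G {a, b} x + (\<Sum>l<n - 1. G {ws' ! l, ws' ! Suc l} x)"
    proof -
      have "length (a # ws') - 1 = Suc (n - 1)" using n2 by (simp add: n_def)
      then show ?thesis by (simp only: sum.lessThan_Suc_shift) (simp add: ws'_def)
    qed
    have e2: "(\<Sum>l\<in>{1..<length (a # ws') - 1}. x ((a # ws') ! l))
        = x b + (\<Sum>l\<in>{1..<n - 1}. x (ws' ! l))"
    proof -
      have "(\<Sum>l\<in>{1..<length (a # ws') - 1}. x ((a # ws') ! l))
          = (\<Sum>l\<in>{Suc 0..<Suc (n - 1)}. x ((a # ws') ! l))"
        proof -
          have "length (a # ws') - 1 = Suc (n - 1)" using n2 by (simp add: n_def)
          then show ?thesis by (simp only: One_nat_def)
        qed
      also have "\<dots> = (\<Sum>l\<in>{0..<n - 1}. x (ws' ! l))"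
        by (simp only: sum.shift_bounds_Suc_ivl) simp
      also have "\<dots> = x (ws' ! 0) + (\<Sum>l\<in>{Suc 0..<n - 1}. x (ws' ! l))"
        using n2 by (subst sum.atLeast_Suc_lessThan) auto
      finally show ?thesis by (simp add: ws'_def)
    qed
    have "chain_gauge G (a # ws') x = G {a, b} x - x b + chain_gauge G ws' x"
      unfolding chain_gauge_def e1 e2 by (simp add: n_def)
    then show ?thesis using IH by (simp add: ws'_def)
  qed
qed simp_all

lemma Inf_plus_const:
  fixes f :: "real \<Rightarrow> real"
  assumes ne: "S \<noteq> {}" and bdd: "bdd_below (f ` S)"
  shows "(INF z\<in>S. f z + C) = (INF z\<in>S. f z) + C"
proof (rule antisym)
  have bdd2: "bdd_below ((\<lambda>z. f z + C) ` S)"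
  proof -
    obtain m where "\<forall>z\<in>S. m \<le> f z" using bdd by (auto simp: bdd_below_def)
    then show ?thesis by (intro bdd_belowI2[of _ "m + C"]) auto
  qed
  have "(INF z\<in>S. f z + C) - C \<le> (INF z\<in>S. f z)"
  proof (rule cINF_greatest[OF ne])
    fix z assume "z \<in> S"
    then have "(INF z\<in>S. f z + C) \<le> f z + C" by (rule cINF_lower[OF bdd2])
    then show "(INF z\<in>S. f z + C) - C \<le> f z" by simp
  qed
  then show "(INF z\<in>S. f z + C) \<le> (INF z\<in>S. f z) + C" by simp
  show "(INF z\<in>S. f z) + C \<le> (INF z\<in>S. f z + C)"
  proof (rule cINF_greatest[OF ne])
    fix z assume "z \<in> S"
    then have "(INF z\<in>S. f z) \<le> f z" by (rule cINF_lower[OF bdd])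
    then show "(INF z\<in>S. f z) + C \<le> f z + C" by simp
  qed
qed


locale chs =
  fixes vs :: "'v list" and g :: "('v \<Rightarrow> real) \<Rightarrow> real"
  assumes dist: "distinct vs"
    and len: "length vs \<ge> 2"
    and exp_margins: "\<forall>j\<in>set vs. \<forall>y. 0 \<le> y j \<longrightarrow> marg_gauge (set vs) g {j} y = y j"
    and g_ge: "\<forall>x. nonneg_on (set vs) x \<longrightarrow> (\<forall>j\<in>set vs. x j \<le> g x)"
    and chain: "\<forall>x. nonneg_on (set vs) x \<longrightarrow> g x = chain_gauge (marg_gauge (set vs) g) vs x"
begin

abbreviation "M \<equiv> marg_gauge (set vs) g"

lemma g_nonneg: "nonneg_on (set vs) x \<Longrightarrow> 0 \<le> g x"
proof -
  assume a: "nonneg_on (set vs) x"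
  have "hd vs \<in> set vs" using len by (cases vs) auto
  then show ?thesis using a g_ge unfolding nonneg_on_def by (meson order_trans)
qed

lemma ex_ext:
  assumes "\<forall>v\<in>J. 0 \<le> y v"
  shows "nonneg_on (set vs) (\<lambda>v. if v \<in> J then y v else 0) \<and> (\<forall>j\<in>J. (\<lambda>v. if v \<in> J then y v else 0) j = y j)"
  using assms unfolding nonneg_on_def by auto

lemma M_nonneg:
  assumes "\<forall>v\<in>J. 0 \<le> y v"
  shows "0 \<le> M J y"
  unfolding marg_gauge_def
proof (rule cInf_greatest)
  show "{g x |x. nonneg_on (set vs) x \<and> (\<forall>j\<in>J. x j = y j)} \<noteq> {}"
    using ex_ext[OF assms] by blast
qed (auto intro: g_nonneg)

lemma elim:
  assumes K: "K \<subseteq> set vs" and c: "c \<in> K" and y: "\<forall>v\<in>K - {c}. 0 \<le> y v"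
  shows "M (K - {c}) y = (INF z\<in>{0..}. M K (y(c := z)))"
proof -
  define A where "A = {g x |x. nonneg_on (set vs) x \<and> (\<forall>j\<in>K - {c}. x j = y j)}"
  have MA: "M (K - {c}) y = Inf A" unfolding A_def marg_gauge_def ..
  have Ane: "A \<noteq> {}" using ex_ext[OF y] unfolding A_def by blast
  have Abdd: "bdd_below A" unfolding A_def by (rule bdd_belowI[of _ 0]) (auto intro: g_nonneg)
  have yz: "\<forall>v\<in>K. 0 \<le> (y(c := z)) v" if "z \<ge> 0" for z using y that by auto
  have Mz: "Inf A \<le> M K (y(c := z))" if "z \<ge> 0" for z
    unfolding marg_gauge_def
  proof (rule cInf_superset_mono[OF _ Abdd])
    show "{g x |x. nonneg_on (set vs) x \<and> (\<forall>j\<in>K. x j = (y(c := z)) j)} \<noteq> {}"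
      using ex_ext[OF yz[OF that]] by blast
    show "{g x |x. nonneg_on (set vs) x \<and> (\<forall>j\<in>K. x j = (y(c := z)) j)} \<subseteq> A"
      unfolding A_def by auto
  qed
  have bdd2: "bdd_below ((\<lambda>z. M K (y(c := z))) ` {0..})"
    by (rule bdd_belowI2[of _ 0]) (use M_nonneg yz in auto)
  show ?thesis
  proof (rule antisym)
    show "M (K - {c}) y \<le> (INF z\<in>{0..}. M K (y(c := z)))"
      unfolding MA by (rule cINF_greatest) (use Mz in auto)
    show "(INF z\<in>{0..}. M K (y(c := z))) \<le> M (K - {c}) y"
      unfolding MA
    proof (rule cInf_greatest[OF Ane])
      fix t assume "t \<in> A"
      then obtain x where x: "t = g x" "nonneg_on (set vs) x" "\<forall>j\<in>K - {c}. x j = y j"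
        unfolding A_def by auto
      have xc: "0 \<le> x c" using x(2) c K unfolding nonneg_on_def by auto
      have "M K (y(c := x c)) \<le> g x"
        unfolding marg_gauge_def
        by (rule cInf_lower) (use x in \<open>auto intro!: bdd_belowI[of _ 0] g_nonneg\<close>)
      moreover have "(INF z\<in>{0..}. M K (y(c := z))) \<le> M K (y(c := x c))"
        by (rule cINF_lower[OF bdd2]) (use xc in auto)
      ultimately show "(INF z\<in>{0..}. M K (y(c := z))) \<le> t" using x(1) by linarith
    qed
  qed
qed

definition Qp :: "'v list \<Rightarrow> bool" where
  "Qp ws \<longleftrightarrow> (\<forall>y. (\<forall>v\<in>set ws. 0 \<le> y v) \<longrightarrow> M (set ws) y = cfr M y ws + y (last ws))"

lemma Q_full: "Qp vs"
  unfolding Qp_def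
proof (intro allI impI)
  fix y :: "'v \<Rightarrow> real" assume y: "\<forall>v\<in>set vs. 0 \<le> y v"
  have "{g x |x. nonneg_on (set vs) x \<and> (\<forall>j\<in>set vs. x j = y j)} = {chain_gauge M vs y}"
  proof
    show "{chain_gauge M vs y} \<subseteq> {g x |x. nonneg_on (set vs) x \<and> (\<forall>j\<in>set vs. x j = y j)}"
    proof -
      define x0 where "x0 = (\<lambda>v. if v \<in> set vs then y v else 0)"
      have x0: "nonneg_on (set vs) x0" "\<forall>j\<in>set vs. x0 j = y j"
        using ex_ext[OF y] unfolding x0_def by auto
      have "g x0 = chain_gauge M vs y"
      proof -
        have "last vs \<in> set vs" using len by (intro last_in_set) auto
        then show ?thesis using chain x0 chain_cfr[OF len] cfr_cong[of vs x0 y] by simp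
      qed
      then show ?thesis using x0 by (auto intro!: exI[of _ x0])
    qed
    show "{g x |x. nonneg_on (set vs) x \<and> (\<forall>j\<in>set vs. x j = y j)} \<subseteq> {chain_gauge M vs y}"
    proof clarify
      fix x assume x: "nonneg_on (set vs) x" "\<forall>j\<in>set vs. x j = y j"
      have "last vs \<in> set vs" using len by (intro last_in_set) auto
      then show "g x = chain_gauge M vs y"
        using chain x chain_cfr[OF len] cfr_cong[of vs x y] by simp
    qed
  qed
  then have "M (set vs) y = chain_gauge M vs y" unfolding marg_gauge_def by simp
  then show "M (set vs) y = cfr M y vs + y (last vs)" using chain_cfr[OF len] by simp
qed

end


context chs
begin

lemma Q_head:
  assumes d: "distinct (a # ws)" and ne: "ws \<noteq> []" and sub: "set (a # ws) \<subseteq> set vs"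
    and Q: "Qp (a # ws)"
  shows "Qp ws"
  unfolding Qp_def
proof (intro allI impI)
  fix y :: "'v \<Rightarrow> real" assume y: "\<forall>v\<in>set ws. 0 \<le> y v"
  obtain b rest where ws: "ws = b # rest" using ne by (cases ws) auto
  have anb: "a \<noteq> b" "a \<notin> set ws" using d ws by auto
  have setws: "set ws = set (a # ws) - {a}" using d by auto
  have yz: "\<forall>v\<in>set (a # ws). 0 \<le> (y(a := z)) v" if "z \<ge> 0" for z using y that by auto
  define C where "C = - y b + cfr M y ws + y (last ws)"
  have eq: "M (set (a # ws)) (y(a := z)) = M {a, b} (y(a := z)) + C" if "z \<ge> 0" for z
  proof -
    have "M (set (a # ws)) (y(a := z)) = cfr M (y(a := z)) (a # ws) + (y(a := z)) (last (a # ws))"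
      using Q yz[OF that] unfolding Qp_def by blast
    also have "cfr M (y(a := z)) (a # ws) = M {a, b} (y(a := z)) - y b + cfr M (y(a := z)) ws"
      using anb ws by simp
    also have "cfr M (y(a := z)) ws = cfr M y ws"
      by (rule cfr_cong) (use anb in auto)
    also have "(y(a := z)) (last (a # ws)) = y (last ws)"
      using ne anb last_in_set[OF ne] by auto
    finally have "M (set (a # ws)) (y(a := z)) = M {a, b} (y(a := z)) - y b + cfr M y ws + y (last ws)" .
    then show ?thesis unfolding C_def by linarith
  qed
  have "M (set ws) y = M (set (a # ws) - {a}) y" by (simp only: setws[symmetric])
  also have "\<dots> = (INF z\<in>{0..}. M (set (a # ws)) (y(a := z)))"
    by (rule elim) (use sub y in auto)
  also have "\<dots> = (INF z\<in>{0..}. M {a, b} (y(a := z)) + C)"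
    by (rule INF_cong[OF refl], rule eq) simp
  also have "\<dots> = (INF z\<in>{0..}. M {a, b} (y(a := z))) + C"
    by (rule Inf_plus_const) (auto intro!: bdd_belowI2[of _ 0] M_nonneg simp: ws y)
  also have "(INF z\<in>{0..}. M {a, b} (y(a := z))) = M ({a, b} - {a}) y"
    by (rule elim[symmetric]) (use sub ws y in auto)
  also have "M ({a, b} - {a}) y = y b"
    using anb exp_margins sub ws y by auto
  finally show "M (set ws) y = cfr M y ws + y (last ws)" unfolding C_def by simp
qed

lemma Q_last:
  assumes d: "distinct (ws @ [b])" and ne: "ws \<noteq> []" and sub: "set (ws @ [b]) \<subseteq> set vs"
    and Q: "Qp (ws @ [b])"
  shows "Qp ws"
  unfolding Qp_def
proof (intro allI impI)
  fix y :: "'v \<Rightarrow> real" assume y: "\<forall>v\<in>set ws. 0 \<le> y v"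
  define a where "a = last ws"
  have aset: "a \<in> set ws" using ne unfolding a_def by auto
  have anb: "a \<noteq> b" "b \<notin> set ws" using d aset by auto
  have setws: "set ws = set (ws @ [b]) - {b}" using d by auto
  have yz: "\<forall>v\<in>set (ws @ [b]). 0 \<le> (y(b := z)) v" if "z \<ge> 0" for z using y that by auto
  define C where "C = cfr M y ws"
  have eq: "M (set (ws @ [b])) (y(b := z)) = M {a, b} (y(b := z)) + C" if "z \<ge> 0" for z
  proof -
    have "M (set (ws @ [b])) (y(b := z)) = cfr M (y(b := z)) (ws @ [b]) + (y(b := z)) (last (ws @ [b]))"
      using Q yz[OF that] unfolding Qp_def by blast
    also have "cfr M (y(b := z)) (ws @ [b]) = cfr M (y(b := z)) ws + M {a, b} (y(b := z)) - z"
      using cfr_snoc[OF ne] unfolding a_def by simp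
    also have "cfr M (y(b := z)) ws = cfr M y ws"
      by (rule cfr_cong) (use anb in auto)
    also have "(y(b := z)) (last (ws @ [b])) = z" by simp
    finally have "M (set (ws @ [b])) (y(b := z)) = cfr M y ws + M {a, b} (y(b := z)) - z + z" .
    then show ?thesis unfolding C_def by linarith
  qed
  have "M (set ws) y = M (set (ws @ [b]) - {b}) y" by (simp only: setws[symmetric])
  also have "\<dots> = (INF z\<in>{0..}. M (set (ws @ [b])) (y(b := z)))"
    by (rule elim) (use sub y anb in auto)
  also have "\<dots> = (INF z\<in>{0..}. M {a, b} (y(b := z)) + C)"
    by (rule INF_cong[OF refl], rule eq) simp
  also have "\<dots> = (INF z\<in>{0..}. M {a, b} (y(b := z))) + C"
    by (rule Inf_plus_const) (auto intro!: bdd_belowI2[of _ 0] M_nonneg simp: aset y)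
  also have "(INF z\<in>{0..}. M {a, b} (y(b := z))) = M ({a, b} - {b}) y"
    by (rule elim[symmetric]) (use sub aset y in auto)
  also have "M ({a, b} - {b}) y = y a"
  proof -
    have "{a, b} - {b} = {a}" using anb by auto
    moreover have "a \<in> set vs" using aset sub by auto
    moreover have "0 \<le> y a" using y aset by auto
    ultimately show ?thesis using exp_margins by simp
  qed
  finally show "M (set ws) y = cfr M y ws + y (last ws)" unfolding C_def a_def by simp
qed

lemma Q_sub: "vs = p @ ws @ q \<Longrightarrow> ws \<noteq> [] \<Longrightarrow> Qp ws"
proof (induction "length p + length q" arbitrary: p ws q rule: less_induct)
  case less
  show ?case
  proof (cases "p = []")
    case pne: False
    have "vs = butlast p @ (last p # ws) @ q" using less.prems pne by simp
    then have "Qp (last p # ws)" using less.hyps[of "butlast p" q "last p # ws"] pne by simp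
    moreover have "distinct (last p # ws)" "set (last p # ws) \<subseteq> set vs"
    proof -
      have "distinct (butlast p @ (last p # ws) @ q)" using dist \<open>vs = butlast p @ (last p # ws) @ q\<close> by simp
      then show "distinct (last p # ws)" by simp
      show "set (last p # ws) \<subseteq> set vs" using \<open>vs = butlast p @ (last p # ws) @ q\<close> by (simp only:) auto
    qed
    ultimately show ?thesis using Q_head less.prems by blast
  next
    case p: True
    show ?thesis
    proof (cases "q = []")
      case True
      then show ?thesis using p less.prems Q_full by simp
    next
      case qne: False
      have "vs = p @ (ws @ [hd q]) @ tl q" using less.prems qne by simp
      then have "Qp (ws @ [hd q])" using less.hyps[of p "tl q" "ws @ [hd q]"] qne by simp
      moreover have "distinct (ws @ [hd q])" "set (ws @ [hd q]) \<subseteq> set vs"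
      proof -
        have "distinct (p @ (ws @ [hd q]) @ tl q)" using dist \<open>vs = p @ (ws @ [hd q]) @ tl q\<close> by simp
        then show "distinct (ws @ [hd q])" by simp
        show "set (ws @ [hd q]) \<subseteq> set vs" using \<open>vs = p @ (ws @ [hd q]) @ tl q\<close> by (simp only:) auto
      qed
      ultimately show ?thesis using Q_last less.prems by blast
    qed
  qed
qed

end


theorem lemma3:
  fixes vs :: "'v list" and k :: nat
    and f g :: "('v \<Rightarrow> real) \<Rightarrow> real"
  assumes dist: "distinct vs"
    and len: "length vs \<ge> 3"
    and k: "k < length vs"
    and gauge: "is_gauge (set vs) f g"
    and dens_nonneg: "\<forall>x. 0 \<le> f x"
    and exp_margins: "\<forall>j\<in>set vs. \<forall>y. 0 \<le> y j \<longrightarrow> marg_gauge (set vs) g {j} y = y j"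
    and g_ge: "\<forall>x. nonneg_on (set vs) x \<longrightarrow> (\<forall>j\<in>set vs. x j \<le> g x)"
    and chain: "\<forall>x. nonneg_on (set vs) x \<longrightarrow> g x = chain_gauge (marg_gauge (set vs) g) vs x"
  shows "\<forall>y. nonneg_on (set (take k vs @ drop (Suc k) vs)) y \<longrightarrow>
           marg_gauge (set vs) g (set (take k vs @ drop (Suc k) vs)) y =
           chain_gauge (marg_gauge (set vs) g) (take k vs @ drop (Suc k) vs) y"
proof (intro allI impI)
  interpret chs vs g using dist len exp_margins g_ge chain by unfold_locales auto
  fix y :: "'v \<Rightarrow> real"
  define r where "r = take k vs @ drop (Suc k) vs"
  define c where "c = vs ! k"
  assume "nonneg_on (set (take k vs @ drop (Suc k) vs)) y"
  then have y: "\<forall>v\<in>set r. 0 \<le> y v" unfolding r_def nonneg_on_def by blast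
  have vsdec: "vs = take k vs @ c # drop (Suc k) vs" unfolding c_def by (simp add: id_take_nth_drop k)
  have d2: "distinct (take k vs @ c # drop (Suc k) vs)" using dist vsdec by simp
  have "set r = set (take k vs @ c # drop (Suc k) vs) - {c}" unfolding r_def using d2 by auto
  then have setr: "set r = set vs - {c}" using vsdec by simp
  have lenr: "length r \<ge> 2" unfolding r_def using assms(2) k by simp
  have cin: "c \<in> set vs" unfolding c_def using k by simp
  have main: "M (set r) y = cfr M y r + y (last r)"
  proof (cases "k = 0")
    case True
    then have "vs = [hd vs] @ r @ []" unfolding r_def using len by (cases vs) auto
    then have "Qp r" by (rule Q_sub) (use lenr in auto)
    then show ?thesis using y unfolding Qp_def by blast
  next
    case k0: False
    show ?thesis
    proof (cases "k = length vs - 1")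
      case True
      then have "vs = [] @ r @ drop k vs" unfolding r_def by simp
      then have "Qp r" by (rule Q_sub) (use lenr in auto)
      then show ?thesis using y unfolding Qp_def by blast
    next
      case False
      define p where "p = take (k - 1) vs"
      define a where "a = vs ! (k - 1)"
      define b where "b = vs ! Suc k"
      define q where "q = drop (Suc (Suc k)) vs"
      have tk: "take k vs = p @ [a]" unfolding p_def a_def using k k0
        by (metis Suc_pred' bot_nat_0.not_eq_extremum less_imp_diff_less take_Suc_conv_app_nth)
      have dk: "drop (Suc k) vs = b # q" unfolding b_def q_def using k False
        by (simp add: Cons_nth_drop_Suc)
      have vs2: "vs = p @ [a, c, b] @ q" using vsdec tk dk by simp
      have r2: "r = p @ [a, b] @ q" unfolding r_def using tk dk by simp
      have dd: "distinct (p @ [a, c, b] @ q)" using dist vs2 by simp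
      have neq: "a \<noteq> c" "b \<noteq> c" "c \<notin> set p" "c \<notin> set q" using dd by auto
      have Qvs: "Qp vs" by (rule Q_sub[of "[]" _ "[]"]) (use k in auto)
      have Qacb: "Qp [a, c, b]" by (rule Q_sub[of p _ q]) (use vs2 in auto)
      have setacb: "set [a, c, b] - {c} = {a, b}" using neq by auto
      define C where "C = cfr M y (p @ [a]) - y b + cfr M y (b # q) + y (last (b # q))"
      have lastvs: "last vs = last (b # q)" using vs2 by (metis append_Cons append_Nil last_appendR list.distinct(1))
      have eq: "M (set vs) (y(c := z)) = M (set [a, c, b]) (y(c := z)) + C" if z: "z \<ge> 0" for z
      proof -
        define w where "w = y(c := z)"
        have wnn: "\<forall>v\<in>set vs. 0 \<le> w v" using y setr z unfolding w_def by auto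
        have wnn2: "\<forall>v\<in>set [a, c, b]. 0 \<le> w v" using wnn vs2 by auto
        have e1: "M (set vs) w = cfr M w vs + w (last vs)" using Qvs wnn unfolding Qp_def by blast
        have e2: "M (set [a, c, b]) w = cfr M w [a, c, b] + w (last [a, c, b])"
          using Qacb wnn2 unfolding Qp_def by blast
        have "cfr M w vs = cfr M w (p @ [a]) + cfr M w (a # [c, b] @ q)"
          using vs2 cfr_append[of M w p a "[c, b] @ q"] by simp
        also have "cfr M w (p @ [a]) = cfr M y (p @ [a])"
          by (rule cfr_cong) (use neq in \<open>auto simp: w_def\<close>)
        also have "cfr M w (a # [c, b] @ q) = M {a, c} w - w c + M {c, b} w - w b + cfr M w (b # q)"
          by simp
        also have "cfr M w (b # q) = cfr M y (b # q)"
          by (rule cfr_cong) (use neq in \<open>auto simp: w_def\<close>)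
        finally have e3: "cfr M w vs = cfr M y (p @ [a]) + (M {a, c} w - w c + M {c, b} w - w b + cfr M y (b # q))" .
        have e4: "cfr M w [a, c, b] = M {a, c} w - w c + M {c, b} w - w b" by simp
        have wb: "w b = y b" "w (last [a, c, b]) = y b" using neq unfolding w_def by auto
        have wl: "w (last vs) = y (last (b # q))" using lastvs neq unfolding w_def
          by (metis fun_upd_other last_in_set list.distinct(1) set_ConsD)
        have "M (set vs) w = M (set [a, c, b]) w + C"
          using e1 e2 e3 e4 wb wl unfolding C_def by linarith
        then show ?thesis unfolding w_def .
      qed
      have "M (set r) y = (INF z\<in>{0..}. M (set vs) (y(c := z)))"
        unfolding setr by (rule elim) (use cin y setr in auto)
      also have "\<dots> = (INF z\<in>{0..}. M (set [a, c, b]) (y(c := z)) + C)"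
        by (rule INF_cong[OF refl], rule eq) simp
      also have "\<dots> = (INF z\<in>{0..}. M (set [a, c, b]) (y(c := z))) + C"
      proof (rule Inf_plus_const)
        show "bdd_below ((\<lambda>z. M (set [a, c, b]) (y(c := z))) ` {0..})"
        proof (rule bdd_belowI2[of _ 0], rule M_nonneg)
          fix z :: real assume "z \<in> {0..}"
          then show "\<forall>v\<in>set [a, c, b]. 0 \<le> (y(c := z)) v" using y r2 by auto
        qed
      qed auto
      also have "(INF z\<in>{0..}. M (set [a, c, b]) (y(c := z))) = M (set [a, c, b] - {c}) y"
        by (rule elim[symmetric]) (use vs2 y r2 in auto)
      also have "set [a, c, b] - {c} = {a, b}" by (rule setacb)
      finally have lhs: "M (set r) y = M {a, b} y + C" .
      have "cfr M y r = cfr M y (p @ [a]) + cfr M y (a # [b] @ q)"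
        using r2 cfr_append[of M y p a "[b] @ q"] by simp
      also have "cfr M y (a # [b] @ q) = M {a, b} y - y b + cfr M y (b # q)" by simp
      finally have "cfr M y r = cfr M y (p @ [a]) + (M {a, b} y - y b + cfr M y (b # q))" .
      moreover have "last r = last (b # q)" using r2 by simp
      ultimately show ?thesis using lhs unfolding C_def by simp
    qed
  qed
  show "marg_gauge (set vs) g (set (take k vs @ drop (Suc k) vs)) y =
           chain_gauge (marg_gauge (set vs) g) (take k vs @ drop (Suc k) vs) y"
    using main chain_cfr[OF lenr] unfolding r_def by simp
qed

end
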